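(* Let $\mu:\mathbb{R}^{n\times n}\to\mathbb{R}$ be the matrix measure induced by a vector norm $|\cdot|$ on $\mathbb{R}^n$. The following four conditions are equivalent: (1) the norm $|\cdot|$ inducing $\mu$ is orthant-monotonic; (2) $\mu$ is admissible, i.e. $\mu(-D)\le 0$ for every $D\in\mathbb{D}^n_{\ge 0}$; (3) $\mu(D)=\max_i\{d_{ii}\}$ for every $D\in\mathbb{D}^n_{\ge 0}$; (4) there exists a matrix $A\in\mathbb{R}^{n\times n}$ such that $\mu(A-D)<0$ for all $D\in\mathbb{D}^n_{\ge 0}$.
   Context: $\mathbb{D}^n_{\ge 0}$ denotes the set of $n\times n$ diagonal matrices with nonnegative diagonal entries $d_{ii}$. For a vector norm $|\cdot|$ on $\mathbb{R}^n$, the induced matrix norm is $\|A\|=\max_{|x|=1}|Ax|$ and the induced matrix measure (logarithmic norm) is $\mu(A)=\lim_{\varepsilon\to0^+}(\|I_n+\varepsilon A\|-1)/\varepsilon$. A norm $|\cdot|$ on $\mathbb{R}^n$ is orthant-monotonic if for all $x,y\in\mathbb{R}^n$: whenever $x_iy_i\ge 0$ and $|x_i|\le|y_i|$ (absolute values) for all $i$, then $|x|\le|y|$. *)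

theory Defs
  imports "HOL-Analysis.Analysis"
begin

definition is_vnorm :: "(real^'n \<Rightarrow> real) \<Rightarrow> bool" where
  "is_vnorm N \<longleftrightarrow>
     (\<forall>x. N x = 0 \<longleftrightarrow> x = 0) \<and>
     (\<forall>c x. N (c *\<^sub>R x) = \<bar>c\<bar> * N x) \<and>
     (\<forall>x y. N (x + y) \<le> N x + N y)"

definition induced_norm :: "(real^'n \<Rightarrow> real) \<Rightarrow> real^'n^'n \<Rightarrow> real" where
  "induced_norm N A = Sup {N (A *v x) | x. N x = 1}"

definition matrix_measure :: "(real^'n \<Rightarrow> real) \<Rightarrow> real^'n^'n \<Rightarrow> real" where
  "matrix_measure N A =
     Lim (at_right 0) (\<lambda>\<epsilon>. (induced_norm N (mat 1 + \<epsilon> *\<^sub>R A) - 1) / \<epsilon>)"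

definition orthant_monotonic :: "(real^'n \<Rightarrow> real) \<Rightarrow> bool" where
  "orthant_monotonic N \<longleftrightarrow>
     (\<forall>x y. (\<forall>i. x $ i * y $ i \<ge> 0 \<and> \<bar>x $ i\<bar> \<le> \<bar>y $ i\<bar>) \<longrightarrow> N x \<le> N y)"

definition diagm :: "('n \<Rightarrow> real) \<Rightarrow> real^'n^'n" where
  "diagm d = (\<chi> i j. if i = j then d i else 0)"

end

theory Submission
  imports Defs
begin

lemma diagm_mv: "diagm d *v x = (\<chi> i. d i * x$i)"
proof -
  have "(\<Sum>j\<in>UNIV. (if i = j then d i else 0) * x$j) = d i * x$i" for i
  proof -
    have "(\<Sum>j\<in>UNIV. (if i = j then d i else 0) * x$j) = (\<Sum>j\<in>UNIV. if i = j then d i * x$j else 0)"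
      by (rule sum.cong) auto
    then show ?thesis by simp
  qed
  then show ?thesis by (simp add: vec_eq_iff matrix_vector_mult_def diagm_def)
qed

lemma diag_id: "mat 1 = diagm (\<lambda>_. 1)"
  by (simp add: vec_eq_iff mat_def diagm_def)
lemma diag_add: "diagm a + diagm b = diagm (\<lambda>i. a i + b i)"
  by (simp add: vec_eq_iff diagm_def)
lemma diag_scale: "c *\<^sub>R diagm a = diagm (\<lambda>i. c * a i)"
  by (simp add: vec_eq_iff diagm_def)
lemma diag_neg: "- diagm a = diagm (\<lambda>i. - a i)"
  by (simp add: vec_eq_iff diagm_def)
lemma diag_diff: "diagm a - diagm b = diagm (\<lambda>i. a i - b i)"
  by (simp add: vec_eq_iff diagm_def)

definition Ek :: "'n \<Rightarrow> 'n \<Rightarrow> real" where "Ek k = (\<lambda>i. if i = k then 1 else 0)"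
definition sc :: "'n \<Rightarrow> real \<Rightarrow> real^'n \<Rightarrow> real^'n" where
  "sc k s x = (\<chi> i. if i = k then s * x$i else x$i)"

lemma sc_mat: "(mat 1 + e *\<^sub>R - diagm (Ek k)) *v y = sc k (1 - e) y"
  by (simp add: diag_id diag_scale diag_neg diag_add diagm_mv Ek_def sc_def vec_eq_iff)
lemma sc_comp: "sc k a (sc k b x) = sc k (a * b) x"
  by (simp add: sc_def vec_eq_iff)
lemma sc_conv: "(1 - p) *\<^sub>R sc k s x = (1 - s) *\<^sub>R sc k p x + (s - p) *\<^sub>R x"
  by (simp add: sc_def vec_eq_iff algebra_simps)
lemma sc_1[simp]: "sc k 1 x = x"
  by (simp add: sc_def vec_eq_iff)
lemma sc_diff: "sc k 0 x - sc k t x = (- (t * x$k)) *\<^sub>R axis k 1"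
  by (simp add: sc_def vec_eq_iff axis_def)

lemma shift_arith: "0<(s::real) \<Longrightarrow> ((1 - s/(1+s)) * G - 1) / (s/(1+s)) = (G - 1)/s - 1"
proof - assume s: "0 < s" then have p: "0 < 1 + s" by simp
  have a: "1 - s/(1+s) = 1/(1+s)" using p by (simp add: field_simps)
  have b: "(G/(1+s) - 1) = (G - (1+s))/(1+s)" using p by (simp add: field_simps)
  have c: "((G - (1+s))/(1+s)) / (s/(1+s)) = (G - (1+s))/s" using p s by simp
  show ?thesis unfolding a using b c s by (simp add: diff_divide_distrib add_divide_distrib)
qed

locale vn = fixes N :: "real^'n \<Rightarrow> real" assumes vn: "is_vnorm N"
begin

lemma Nzero_iff: "N x = 0 \<longleftrightarrow> x = 0" using vn unfolding is_vnorm_def by blast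
lemma Nscale: "N (c *\<^sub>R x) = \<bar>c\<bar> * N x" using vn unfolding is_vnorm_def by blast
lemma Ntri: "N (x + y) \<le> N x + N y" using vn unfolding is_vnorm_def by blast
lemma N0[simp]: "N 0 = 0" using Nzero_iff by blast
lemma Nneg[simp]: "N (- x) = N x"
  using Nscale[of "-1" x] by simp
lemma Nnonneg: "0 \<le> N x"
  using Ntri[of x "-x"] by simp
lemma Ndiff: "N x - N y \<le> N (x - y)"
  using Ntri[of "x - y" y] by simp
lemma Nsum: "finite S \<Longrightarrow> N (sum f S) \<le> (\<Sum>i\<in>S. N (f i))"
proof (induction S rule: finite_induct)
  case empty then show ?case by simp
next
  case (insert a S)
  then show ?case using Ntri[of "f a" "sum f S"] by simp
qed

definition Bn where "Bn = (\<Sum>i\<in>UNIV. N (axis i 1))"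

lemma Bnn: "0 \<le> Bn" unfolding Bn_def by (simp add: sum_nonneg Nnonneg)

lemma Nupper: "N x \<le> Bn * norm x"
proof -
  have "N x = N (\<Sum>i\<in>UNIV. x$i *\<^sub>R axis i 1)"
    using basis_expansion[of x] by (simp add: scalar_mult_eq_scaleR)
  also have "\<dots> \<le> (\<Sum>i\<in>UNIV. N (x$i *\<^sub>R axis i 1))" by (rule Nsum) simp
  also have "\<dots> = (\<Sum>i\<in>UNIV. \<bar>x$i\<bar> * N (axis i 1))" by (simp add: Nscale)
  also have "\<dots> \<le> (\<Sum>i\<in>UNIV. norm x * N (axis i 1))"
    by (rule sum_mono) (simp add: mult_right_mono component_le_norm_cart Nnonneg)
  also have "\<dots> = Bn * norm x" by (simp add: Bn_def sum_distrib_left mult.commute)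
  finally show ?thesis .
qed

lemma Nlip: "\<bar>N x - N y\<bar> \<le> Bn * norm (x - y)"
proof -
  have "N x - N y \<le> Bn * norm (x - y)" using Ndiff[of x y] Nupper[of "x - y"] by linarith
  moreover have "N y - N x \<le> Bn * norm (x - y)" using Ndiff[of y x] Nupper[of "y - x"]
    by (simp add: norm_minus_commute)
  ultimately show ?thesis by linarith
qed

lemma Ncont: "continuous_on UNIV N"
  unfolding continuous_on_iff
proof (intro ballI allI impI)
  fix x :: "real^'n" and e :: real assume e: "0 < e"
  show "\<exists>d>0. \<forall>x'\<in>UNIV. dist x' x < d \<longrightarrow> dist (N x') (N x) < e"
  proof (intro exI[of _ "e / (Bn + 1)"] conjI ballI impI)
    show "0 < e / (Bn + 1)" using e Bnn by simp
    fix y assume "dist y x < e / (Bn + 1)"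
    then have "norm (y - x) * (Bn + 1) < e" using Bnn by (simp add: dist_norm field_simps)
    moreover have "\<bar>N y - N x\<bar> \<le> Bn * norm (y - x)" by (rule Nlip)
    moreover have "Bn * norm (y - x) \<le> norm (y - x) * (Bn + 1)" by (simp add: algebra_simps)
    ultimately show "dist (N y) (N x) < e" by (simp add: dist_real_def)
  qed
qed

lemma Nlower: "\<exists>m>0. \<forall>x. m * norm x \<le> N x"
proof -
  have "compact (sphere (0::real^'n) 1)" by simp
  moreover have "sphere (0::real^'n) 1 \<noteq> {}" by simp
  moreover have "continuous_on (sphere 0 1) N" using Ncont continuous_on_subset by blast
  ultimately obtain z where z: "z \<in> sphere 0 1" and zmin: "\<forall>y\<in>sphere 0 1. N z \<le> N y"
    using continuous_attains_inf by blast
  have "z \<noteq> 0" using z by auto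
  then have m: "0 < N z" using Nzero_iff Nnonneg by (metis order_le_less)
  show ?thesis
  proof (intro exI[of _ "N z"] conjI allI)
    fix x :: "real^'n"
    show "N z * norm x \<le> N x"
    proof (cases "x = 0")
      case True then show ?thesis by simp
    next
      case False
      then have "(1 / norm x) *\<^sub>R x \<in> sphere 0 1" by simp
      then have "N z \<le> N ((1 / norm x) *\<^sub>R x)" using zmin by blast
      also have "\<dots> = N x / norm x" by (simp add: Nscale)
      finally show ?thesis using False by (simp add: field_simps)
    qed
  qed (rule m)
qed

lemma scaleR_mv: "(c *\<^sub>R M) *v x = c *\<^sub>R (M *v (x::real^'n))"
  by (simp add: vec_eq_iff matrix_vector_mult_def sum_distrib_left mult.assoc)

lemma Kbound: "\<exists>C. \<forall>x. N (M *v x) \<le> C * N x"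
proof -
  obtain m where m: "0 < m" "\<forall>x. m * norm x \<le> N x" using Nlower by blast
  define S where "S = (\<Sum>j\<in>UNIV. N (column j M))"
  have S: "0 \<le> S" unfolding S_def by (simp add: sum_nonneg Nnonneg)
  show ?thesis
  proof (intro exI allI)
    fix x
    have "N (M *v x) = N (\<Sum>j\<in>UNIV. x$j *\<^sub>R column j M)"
      by (simp add: matrix_mult_sum scalar_mult_eq_scaleR)
    also have "\<dots> \<le> (\<Sum>j\<in>UNIV. N (x$j *\<^sub>R column j M))" by (rule Nsum) simp
    also have "\<dots> = (\<Sum>j\<in>UNIV. \<bar>x$j\<bar> * N (column j M))" by (simp add: Nscale)
    also have "\<dots> \<le> (\<Sum>j\<in>UNIV. norm x * N (column j M))"
      by (rule sum_mono) (simp add: mult_right_mono component_le_norm_cart Nnonneg)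
    also have "\<dots> = S * norm x" by (simp add: S_def sum_distrib_left mult.commute)
    also have "\<dots> \<le> S * (N x / m)"
      using m S by (intro mult_left_mono) (auto simp: field_simps)
    also have "\<dots> = (S / m) * N x" by simp
    finally show "N (M *v x) \<le> (S / m) * N x" .
  qed
qed

lemma unit_ex: "\<exists>x. N x = 1"
proof -
  obtain x :: "real^'n" where "x \<noteq> 0" using zero_neq_one[where 'a="real^'n"] by blast
  then have "0 < N x" using Nzero_iff Nnonneg by (metis order_le_less)
  then show ?thesis by (intro exI[of _ "(1 / N x) *\<^sub>R x"]) (simp add: Nscale)
qed

lemma Kset_bdd: "bdd_above {N (M *v x) | x. N x = 1}"
proof -
  obtain C where "\<forall>x. N (M *v x) \<le> C * N x" using Kbound by blast
  then show ?thesis unfolding bdd_above_def by (intro exI[of _ C]) (auto, metis mult_1_right)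
qed

lemma K1: "N x = 1 \<Longrightarrow> N (M *v x) \<le> induced_norm N M"
  unfolding induced_norm_def by (rule cSup_upper[OF _ Kset_bdd]) auto

lemma K2: "(\<And>x. N x = 1 \<Longrightarrow> N (M *v x) \<le> c) \<Longrightarrow> induced_norm N M \<le> c"
  unfolding induced_norm_def using unit_ex by (intro cSup_least) auto

lemma K3: "N (M *v x) \<le> induced_norm N M * N x"
proof (cases "x = 0")
  case True then show ?thesis by simp
next
  case False
  then have p: "0 < N x" using Nzero_iff Nnonneg by (metis order_le_less)
  have "N (M *v ((1 / N x) *\<^sub>R x)) \<le> induced_norm N M"
    using p by (intro K1) (simp add: Nscale)
  then have "N (M *v x) / N x \<le> induced_norm N M"
    using p by (simp add: matrix_vector_mult_scaleR Nscale)
  then show ?thesis using p by (simp add: field_simps)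
qed

lemma K4: "(\<And>x. N (M *v x) \<le> c * N x) \<Longrightarrow> induced_norm N M \<le> c"
  by (rule K2) (metis mult.right_neutral)

lemma Kadd: "induced_norm N (M1 + M2) \<le> induced_norm N M1 + induced_norm N M2"
proof (rule K4)
  fix x
  have "N ((M1 + M2) *v x) \<le> N (M1 *v x) + N (M2 *v x)"
    by (simp add: matrix_vector_mult_add_rdistrib Ntri)
  also have "\<dots> \<le> induced_norm N M1 * N x + induced_norm N M2 * N x"
    using K3 by (intro add_mono) auto
  finally show "N ((M1 + M2) *v x) \<le> (induced_norm N M1 + induced_norm N M2) * N x"
    by (simp add: algebra_simps)
qed

lemma Kscale: "0 \<le> c \<Longrightarrow> induced_norm N (c *\<^sub>R M) \<le> c * induced_norm N M"
proof (rule K4)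
  fix x assume c: "0 \<le> c"
  have "N ((c *\<^sub>R M) *v x) = c * N (M *v x)" using c by (simp add: scaleR_mv Nscale)
  also have "\<dots> \<le> c * (induced_norm N M * N x)" using c K3 by (intro mult_left_mono) auto
  finally show "N ((c *\<^sub>R M) *v x) \<le> c * induced_norm N M * N x" by simp
qed

lemma Kid: "induced_norm N (mat 1) = 1"
proof (rule antisym)
  show "induced_norm N (mat 1) \<le> 1" by (rule K2) simp
  obtain x where "N x = 1" using unit_ex by blast
  then show "1 \<le> induced_norm N (mat 1)" using K1[of x "mat 1"] by simp
qed

definition q where "q A e = (induced_norm N (mat 1 + e *\<^sub>R A) - 1) / e"

lemma qmono: assumes "0 < s" "s \<le> t" shows "q A s \<le> q A t"
proof -
  have t: "0 < t" using assms by simp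
  have eq: "mat 1 + s *\<^sub>R A = (s/t) *\<^sub>R (mat 1 + t *\<^sub>R A) + (1 - s/t) *\<^sub>R mat 1"
    using t by (simp add: algebra_simps)
  have "induced_norm N (mat 1 + s *\<^sub>R A) \<le> (s/t) * induced_norm N (mat 1 + t *\<^sub>R A) + (1 - s/t) * 1"
  proof -
    have "induced_norm N (mat 1 + s *\<^sub>R A) \<le> induced_norm N ((s/t) *\<^sub>R (mat 1 + t *\<^sub>R A)) + induced_norm N ((1 - s/t) *\<^sub>R mat 1)"
      unfolding eq by (rule Kadd)
    also have "\<dots> \<le> (s/t) * induced_norm N (mat 1 + t *\<^sub>R A) + (1 - s/t) * induced_norm N (mat 1)"
      using assms t by (intro add_mono Kscale) auto
    finally show ?thesis by (simp add: Kid)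
  qed
  then have "induced_norm N (mat 1 + s *\<^sub>R A) - 1 \<le> (s/t) * (induced_norm N (mat 1 + t *\<^sub>R A) - 1)"
    by (simp add: algebra_simps)
  then have "(induced_norm N (mat 1 + s *\<^sub>R A) - 1) / s \<le> (induced_norm N (mat 1 + t *\<^sub>R A) - 1) / t"
    using assms t by (simp add: field_simps)
  then show ?thesis unfolding q_def .
qed

lemma qlow: assumes "0 < e" shows "- induced_norm N (- A) \<le> q A e"
proof -
  have "1 \<le> induced_norm N (mat 1 + e *\<^sub>R A) + induced_norm N (e *\<^sub>R (- A))"
    using Kadd[of "mat 1 + e *\<^sub>R A" "e *\<^sub>R (- A)"] by (simp add: Kid)
  also have "\<dots> \<le> induced_norm N (mat 1 + e *\<^sub>R A) + e * induced_norm N (- A)"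
    using assms by (intro add_left_mono Kscale) simp
  finally show ?thesis using assms unfolding q_def by (simp add: field_simps)
qed

lemma qbdd: "bdd_below (q A ` {0<..})"
  unfolding bdd_below_def using qlow by blast

lemma mu_Inf: "matrix_measure N A = Inf (q A ` {0<..})"
proof -
  define L where "L = Inf (q A ` {0<..})"
  have "(q A \<longlongrightarrow> L) (at_right 0)"
  proof (rule order_tendstoI)
    fix a assume "a < L"
    then show "\<forall>\<^sub>F e in at_right 0. a < q A e"
      unfolding eventually_at_right_field L_def
      by (intro exI[of _ 1]) (auto intro: less_le_trans cInf_lower[OF _ qbdd])
  next
    fix a assume "L < a"
    then obtain t where t: "0 < t" "q A t < a"
      unfolding L_def by (subst (asm) cInf_less_iff) (auto simp: qbdd)
    then show "\<forall>\<^sub>F e in at_right 0. q A e < a"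
      unfolding eventually_at_right_field
      by (intro exI[of _ t]) (auto, meson qmono less_imp_le le_less_trans)
  qed
  then have "Lim (at_right 0) (q A) = L" by (rule tendsto_Lim[rotated]) simp
  then show ?thesis unfolding matrix_measure_def L_def q_def[abs_def] .
qed

lemma mu_le: "0 < e \<Longrightarrow> matrix_measure N A \<le> q A e"
  unfolding mu_Inf by (rule cInf_lower[OF _ qbdd]) simp

lemma mu_ge: "(\<And>e. 0 < e \<Longrightarrow> c \<le> q A e) \<Longrightarrow> c \<le> matrix_measure N A"
  unfolding mu_Inf by (rule cInf_greatest) auto

lemma mu_add: "matrix_measure N (A + B) \<le> matrix_measure N A + matrix_measure N B"
proof -
  have *: "matrix_measure N (A + B) \<le> q A s + q B t" if st: "0 < s" "0 < t" for s t
  proof -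
    define e where "e = min s t / 2"
    have e: "0 < e" "2 * e \<le> s" "2 * e \<le> t" using st by (auto simp: e_def)
    have eq: "mat 1 + e *\<^sub>R (A + B) = (1/2) *\<^sub>R (mat 1 + (2*e) *\<^sub>R A) + (1/2) *\<^sub>R (mat 1 + (2*e) *\<^sub>R B)"
      by (simp add: vec_eq_iff mat_def algebra_simps)
    have "induced_norm N (mat 1 + e *\<^sub>R (A + B)) \<le> (1/2) * induced_norm N (mat 1 + (2*e) *\<^sub>R A) + (1/2) * induced_norm N (mat 1 + (2*e) *\<^sub>R B)"
      unfolding eq by (rule order_trans[OF Kadd add_mono[OF Kscale Kscale]]) auto
    then have "induced_norm N (mat 1 + e *\<^sub>R (A + B)) - 1 \<le> ((induced_norm N (mat 1 + (2*e) *\<^sub>R A) - 1) + (induced_norm N (mat 1 + (2*e) *\<^sub>R B) - 1)) / 2"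
      by simp
    then have "(induced_norm N (mat 1 + e *\<^sub>R (A + B)) - 1) / e \<le> (((induced_norm N (mat 1 + (2*e) *\<^sub>R A) - 1) + (induced_norm N (mat 1 + (2*e) *\<^sub>R B) - 1)) / 2) / e"
      using e(1) by (intro divide_right_mono) auto
    also have "\<dots> = q A (2*e) + q B (2*e)" using e(1) unfolding q_def by (simp add: field_simps)
    finally have "q (A + B) e \<le> q A (2*e) + q B (2*e)" unfolding q_def .
    also have "\<dots> \<le> q A s + q B t" using e by (intro add_mono qmono) auto
    finally show ?thesis using mu_le[OF e(1), of "A + B"] by linarith
  qed
  have "matrix_measure N (A + B) - q B t \<le> matrix_measure N A" if "0 < t" for t
    using * that by (intro mu_ge) (auto simp: algebra_simps)
  then have "matrix_measure N (A + B) - matrix_measure N A \<le> matrix_measure N B"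
    by (intro mu_ge) (auto simp: algebra_simps)
  then show ?thesis by simp
qed

lemma mu_scale: assumes "0 < t" shows "t * matrix_measure N B \<le> matrix_measure N (t *\<^sub>R B)"
proof (rule mu_ge)
  fix e :: real assume e: "0 < e"
  have "q (t *\<^sub>R B) e = t * q B (t * e)" using e assms unfolding q_def by (simp add: field_simps)
  moreover have "matrix_measure N B \<le> q B (t * e)" using e assms by (intro mu_le) simp
  ultimately show "t * matrix_measure N B \<le> q (t *\<^sub>R B) e" using assms by simp
qed

lemma mu_shift: "matrix_measure N (A - mat 1) + 1 \<le> matrix_measure N A"
proof (rule mu_ge)
  fix s :: real assume s: "0 < s"
  define e where "e = s / (1 + s)"
  have e: "0 < e" "e < 1" using s by (auto simp: e_def)
  have eq: "mat 1 + e *\<^sub>R (A - mat 1) = (1 - e) *\<^sub>R (mat 1 + s *\<^sub>R A)"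
  proof -
    have "(1 - e) * s = e" using s by (simp add: e_def field_simps)
    then show ?thesis by (simp add: vec_eq_iff mat_def algebra_simps) (metis distrib_right mult.assoc)
  qed
  have "induced_norm N (mat 1 + e *\<^sub>R (A - mat 1)) \<le> (1 - e) * induced_norm N (mat 1 + s *\<^sub>R A)"
    unfolding eq using e by (intro Kscale) simp
  then have "(induced_norm N (mat 1 + e *\<^sub>R (A - mat 1)) - 1) / e \<le> ((1 - e) * induced_norm N (mat 1 + s *\<^sub>R A) - 1) / e"
    using e by (intro divide_right_mono) auto
  also have "((1 - e) * induced_norm N (mat 1 + s *\<^sub>R A) - 1) / e = q A s - 1"
    unfolding e_def q_def using shift_arith[OF s] .
  finally have "q (A - mat 1) e \<le> q A s - 1" unfolding q_def .
  then show "matrix_measure N (A - mat 1) + 1 \<le> q A s" using mu_le[OF e(1), of "A - mat 1"] by simp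
qed

lemma Kdiag_ge: "g k \<le> induced_norm N (diagm g)"
proof -
  define x where "x = (1 / N (axis k 1)) *\<^sub>R axis k (1::real)"
  have "axis k (1::real) \<noteq> 0" by (simp add: axis_eq_0_iff)
  then have p: "0 < N (axis k 1)" using Nzero_iff Nnonneg by (metis order_le_less)
  have x1: "N x = 1" using p by (simp add: x_def Nscale)
  have "diagm g *v x = g k *\<^sub>R x"
    by (simp add: diagm_mv x_def vec_eq_iff axis_def)
  then have "N (diagm g *v x) = \<bar>g k\<bar>" using x1 by (simp add: Nscale)
  then show ?thesis using K1[OF x1, of "diagm g"] by simp
qed

lemma contr: assumes "orthant_monotonic N" "\<And>i. 0 \<le> g i \<and> g i \<le> 1"
  shows "N (diagm g *v x) \<le> N x"
  using assms unfolding orthant_monotonic_def diagm_mv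
proof -
  assume om: "\<forall>x y. (\<forall>i. 0 \<le> x $ i * y $ i \<and> \<bar>x $ i\<bar> \<le> \<bar>y $ i\<bar>) \<longrightarrow> N x \<le> N y"
  have "\<forall>i. 0 \<le> (g i * x$i) * x$i \<and> \<bar>g i * x$i\<bar> \<le> \<bar>x$i\<bar>"
  proof
    fix i
    have g: "0 \<le> g i" "g i \<le> 1" using assms(2) by auto
    have "0 \<le> g i * (x$i * x$i)" using g by simp
    moreover have "\<bar>g i\<bar> * \<bar>x$i\<bar> \<le> 1 * \<bar>x$i\<bar>" using g by (intro mult_right_mono) auto
    ultimately show "0 \<le> (g i * x$i) * x$i \<and> \<bar>g i * x$i\<bar> \<le> \<bar>x$i\<bar>"
      by (simp add: abs_mult mult.assoc)
  qed
  then show "N (\<chi> i. g i * x$i) \<le> N x" using om by auto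
qed

lemma Kdiag_le: assumes "orthant_monotonic N" "0 < c" "\<And>i. 0 \<le> g i \<and> g i \<le> c"
  shows "induced_norm N (diagm g) \<le> c"
proof (rule K4)
  fix x
  have "diagm g *v x = c *\<^sub>R (diagm (\<lambda>i. g i / c) *v x)"
    using assms(2) by (simp add: diagm_mv vec_eq_iff)
  moreover have "N (diagm (\<lambda>i. g i / c) *v x) \<le> N x"
    using assms by (intro contr) auto
  ultimately show "N (diagm g *v x) \<le> c * N x" using assms(2) by (simp add: Nscale)
qed

lemma P1_P3: assumes "orthant_monotonic N" "\<And>i. 0 \<le> d i"
  shows "matrix_measure N (diagm d) = Max (range d)"
proof -
  define M where "M = Max (range d)"
  have dM: "d i \<le> M" for i unfolding M_def by (rule Max_ge) auto
  have "Max (range d) \<in> range d" by (rule Max_in) auto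
  then obtain k where k: "d k = M" unfolding M_def by (metis rangeE)
  have M0: "0 \<le> M" using assms(2)[of k] k by simp
  have qe: "q (diagm d) e = M" if e: "0 < e" for e
  proof -
    have eq: "mat 1 + e *\<^sub>R diagm d = diagm (\<lambda>i. 1 + e * d i)"
      by (simp add: diag_id diag_scale diag_add)
    have "induced_norm N (diagm (\<lambda>i. 1 + e * d i)) \<le> 1 + e * M"
    proof (rule Kdiag_le[OF assms(1)])
      show "0 < 1 + e * M" using e M0 by (simp add: add_pos_nonneg)
      fix i show "0 \<le> 1 + e * d i \<and> 1 + e * d i \<le> 1 + e * M"
        using e assms(2)[of i] dM[of i] by (simp add: mult_left_mono add_nonneg_nonneg)
    qed
    moreover have "1 + e * M \<le> induced_norm N (diagm (\<lambda>i. 1 + e * d i))"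
      using Kdiag_ge[of "\<lambda>i. 1 + e * d i" k] k by simp
    ultimately show ?thesis using e unfolding q_def eq by simp
  qed
  have "matrix_measure N (diagm d) \<le> M" using mu_le[of 1 "diagm d"] qe[of 1] by simp
  moreover have "M \<le> matrix_measure N (diagm d)" by (rule mu_ge) (simp add: qe)
  ultimately show ?thesis unfolding M_def by simp
qed

lemma P1_P2: assumes "orthant_monotonic N" "\<And>i. 0 \<le> d i"
  shows "matrix_measure N (- diagm d) \<le> 0"
proof -
  define M where "M = Max (range d)"
  have dM: "d i \<le> M" for i unfolding M_def by (rule Max_ge) auto
  have "Max (range d) \<in> range d" by (rule Max_in) auto
  then obtain k where k: "d k = M" unfolding M_def by (metis rangeE)
  have M0: "0 \<le> M" using assms(2)[of k] k by simp
  define e where "e = 1 / (1 + M)"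
  have e: "0 < e" using M0 by (simp add: e_def)
  have eq: "mat 1 + e *\<^sub>R - diagm d = diagm (\<lambda>i. 1 - e * d i)"
    by (simp add: diag_id diag_scale diag_add diag_neg)
  have "0 \<le> 1 - e * d i \<and> 1 - e * d i \<le> 1" for i
  proof -
    have "e * d i \<le> e * M" using e dM by (intro mult_left_mono) auto
    also have "e * M \<le> 1" using M0 by (simp add: e_def field_simps)
    finally show ?thesis using e assms(2)[of i] by simp
  qed
  then have "induced_norm N (diagm (\<lambda>i. 1 - e * d i)) \<le> 1"
    using assms by (intro Kdiag_le) auto
  then have "q (- diagm d) e \<le> 0" using e unfolding q_def eq by (simp add: divide_nonpos_pos)
  then show ?thesis using mu_le[OF e, of "- diagm d"] by simp
qed

lemma P1_P4: assumes "orthant_monotonic N"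
  shows "\<exists>A. \<forall>d. (\<forall>i. d i \<ge> 0) \<longrightarrow> matrix_measure N (A - diagm d) < 0"
proof (intro exI[of _ "- mat 1"] allI impI)
  fix d :: "'n \<Rightarrow> real" assume "\<forall>i. d i \<ge> 0"
  then have "matrix_measure N (- diagm d) \<le> 0" using P1_P2 assms by auto
  moreover have eq: "- mat 1 - diagm d = (- diagm d) - mat 1" by simp
  ultimately show "matrix_measure N (- mat 1 - diagm d) < 0"
    unfolding eq using mu_shift[of "- diagm d"] by linarith
qed

lemma P4_P2: assumes "\<forall>d. (\<forall>i. d i \<ge> 0) \<longrightarrow> matrix_measure N (A - diagm d) < 0"
    and d: "\<And>i. 0 \<le> d i"
  shows "matrix_measure N (- diagm d) \<le> 0"
proof (rule ccontr)
  assume "\<not> ?thesis"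
  then have a: "0 < matrix_measure N (- diagm d)" by simp
  define t where "t = (\<bar>matrix_measure N (- A)\<bar> + 1) / matrix_measure N (- diagm d)"
  have t: "0 < t" using a by (simp add: t_def)
  have "t * matrix_measure N (- diagm d) \<le> matrix_measure N (t *\<^sub>R - diagm d)"
    by (rule mu_scale[OF t])
  also have "t *\<^sub>R - diagm d = (A - diagm (\<lambda>i. t * d i)) + (- A)"
    by (simp add: diag_scale diag_neg)
  also have "matrix_measure N \<dots> \<le> matrix_measure N (A - diagm (\<lambda>i. t * d i)) + matrix_measure N (- A)"
    by (rule mu_add)
  also have "\<dots> < matrix_measure N (- A)"
    using assms(1) t d by (simp add: mult_nonneg_nonneg less_imp_le)
  finally have "t * matrix_measure N (- diagm d) < matrix_measure N (- A)" .
  moreover have "t * matrix_measure N (- diagm d) = \<bar>matrix_measure N (- A)\<bar> + 1"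
    using a by (simp add: t_def)
  ultimately show False by simp
qed

end
context vn begin
lemma core_pos: assumes core: "matrix_measure N (- diagm (Ek k)) \<le> 0"
  and s: "0 < s" "s < 1" shows "N (sc k s x) \<le> N x"
proof (rule ccontr)
  assume neg: "\<not> N (sc k s x) \<le> N x"
  define y where "y = sc k s x"
  define D where "D = N y - N x"
  have D: "0 < D" using neg by (simp add: D_def y_def)
  have fy: "0 < N y" using D Nnonneg[of x] by (simp add: D_def)
  define c1 where "c1 = s * D / ((1 - s) * N y)"
  have c1: "0 < c1" using s D fy by (simp add: c1_def)
  have main: "c1 \<le> q (- diagm (Ek k)) e" if e: "0 < e" "e < 1" for e
  proof -
    define p where "p = s * (1 - e)"
    have p: "0 \<le> p" "p < s" using s e by (auto simp: p_def mult_less_cancel_left1)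
    define Ke where "Ke = induced_norm N (mat 1 + e *\<^sub>R - diagm (Ek k))"
    have "(1 - p) * N y = N ((1 - p) *\<^sub>R sc k s x)" using p s by (simp add: Nscale y_def)
    also have "\<dots> \<le> N ((1 - s) *\<^sub>R sc k p x) + N ((s - p) *\<^sub>R x)" unfolding sc_conv[of p k s x] by (rule Ntri)
    also have "\<dots> = (1 - s) * N (sc k p x) + (s * e) * N x"
    proof -
      have sp: "s - p = s * e" by (simp add: p_def algebra_simps)
      have "N ((1 - s) *\<^sub>R sc k p x) = (1 - s) * N (sc k p x)" using s by (simp add: Nscale)
      moreover have "N ((s - p) *\<^sub>R x) = (s * e) * N x" unfolding sp using s e by (simp add: Nscale)
      ultimately show ?thesis by simp
    qed
    finally have h1: "(1 - p) * N y \<le> (1 - s) * N (sc k p x) + (s * e) * N x" .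
    have "sc k p x = (mat 1 + e *\<^sub>R - diagm (Ek k)) *v y"
      unfolding sc_mat y_def sc_comp p_def by (simp add: mult.commute)
    then have h2: "N (sc k p x) \<le> Ke * N y" using K3 by (simp add: Ke_def)
    have "(1 - s) * N (sc k p x) \<le> (1 - s) * (Ke * N y)" using s h2 by (intro mult_left_mono) auto
    then have h3: "s * e * D \<le> (1 - s) * N y * (Ke - 1)"
      using h1 unfolding D_def p_def by (simp add: algebra_simps)
    have "c1 * e \<le> Ke - 1"
    proof -
      have "c1 * e = (s * e * D) / ((1 - s) * N y)" by (simp add: c1_def)
      also have "\<dots> \<le> Ke - 1"
      proof -
        have pz: "0 < (1 - s) * N y" using s fy by simp
        show ?thesis by (rule pos_divide_le_eq[OF pz, THEN iffD2]) (metis h3 mult.commute)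
      qed
      finally show ?thesis .
    qed
    then show ?thesis using e unfolding q_def Ke_def by (simp add: le_divide_eq)
  qed
  have "c1 \<le> q (- diagm (Ek k)) e" if e: "0 < e" for e
  proof (cases "e < 1")
    case True then show ?thesis using main e by simp
  next
    case False
    then have "q (- diagm (Ek k)) (1/2) \<le> q (- diagm (Ek k)) e" by (intro qmono) auto
    then show ?thesis using main[of "1/2"] by simp
  qed
  then have "c1 \<le> matrix_measure N (- diagm (Ek k))" by (rule mu_ge)
  then show False using core c1 by simp
qed

lemma core_scale: assumes core: "matrix_measure N (- diagm (Ek k)) \<le> 0"
  and s: "0 \<le> s" "s \<le> 1" shows "N (sc k s x) \<le> N x"
proof -
  have pos: "N (sc k t x) \<le> N x" if "0 < t" "t \<le> 1" for t
  proof (cases "t = 1")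
    case True then show ?thesis by simp
  next
    case False then show ?thesis using core_pos[OF core] that by simp
  qed
  show ?thesis
  proof (cases "s = 0")
    case False then show ?thesis using pos s by simp
  next
    case True
    define C where "C = \<bar>x$k\<bar> * N (axis k 1)"
    have C: "0 \<le> C" unfolding C_def using Nnonneg by simp
    have "N (sc k 0 x) \<le> N x + \<epsilon>" if eps: "0 < \<epsilon>" for \<epsilon>
    proof -
      define t where "t = min (1/2) (\<epsilon> / (C + 1))"
      have t: "0 < t" "t \<le> 1" using eps C by (auto simp: t_def)
      have "t * C \<le> (\<epsilon> / (C + 1)) * C" using C by (intro mult_right_mono) (auto simp: t_def)
      also have "\<dots> \<le> \<epsilon>" using C eps by (simp add: field_simps)
      finally have tC: "t * C \<le> \<epsilon>" .
      have "N (sc k 0 x) \<le> N (sc k t x) + N (sc k 0 x - sc k t x)"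
        using Ntri[of "sc k t x" "sc k 0 x - sc k t x"] by simp
      also have "N (sc k 0 x - sc k t x) = t * C"
        unfolding sc_diff C_def using t by (simp add: Nscale abs_mult)
      finally show ?thesis using pos[OF t] tC by simp
    qed
    then show ?thesis unfolding True using field_le_epsilon by blast
  qed
qed

lemma core_multi: assumes core: "\<And>k. matrix_measure N (- diagm (Ek k)) \<le> 0"
  and g: "\<And>i. 0 \<le> g i \<and> g i \<le> 1" and S: "finite S"
  shows "N (\<chi> i. if i \<in> S then g i * y$i else y$i) \<le> N y"
  using S
proof (induction S rule: finite_induct)
  case empty then show ?case by simp
next
  case (insert k S)
  have "(\<chi> i. if i \<in> insert k S then g i * y$i else y$i) = sc k (g k) (\<chi> i. if i \<in> S then g i * y$i else y$i)"
    using insert(2) by (auto simp: sc_def vec_eq_iff)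
  then have "N (\<chi> i. if i \<in> insert k S then g i * y$i else y$i) \<le> N (\<chi> i. if i \<in> S then g i * y$i else y$i)"
    using core_scale[OF core] g by simp
  then show ?case using insert(3) by simp
qed

lemma core_P1: assumes core: "\<And>k. matrix_measure N (- diagm (Ek k)) \<le> 0"
  shows "orthant_monotonic N"
  unfolding orthant_monotonic_def
proof (intro allI impI)
  fix x y :: "real^'n"
  assume xy: "\<forall>i. 0 \<le> x $ i * y $ i \<and> \<bar>x $ i\<bar> \<le> \<bar>y $ i\<bar>"
  define g where "g i = (if y$i = 0 then 0 else x$i / y$i)" for i
  have g: "0 \<le> g i \<and> g i \<le> 1" for i
  proof (cases "y$i = 0")
    case True then show ?thesis by (simp add: g_def)
  next
    case False
    have eq: "x$i / y$i = (x$i * y$i) / (y$i * y$i)" using False by simp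
    have yy: "0 < y$i * y$i" using False by (auto simp: zero_less_mult_iff linorder_neq_iff)
    have xy0: "0 \<le> x$i * y$i" using xy by simp
    have "0 \<le> (x$i * y$i) / (y$i * y$i)" by (rule divide_nonneg_pos[OF xy0 yy])
    then have "0 \<le> x$i / y$i" unfolding eq .
    moreover have "x$i / y$i \<le> 1"
    proof -
      have "\<bar>x$i\<bar> / \<bar>y$i\<bar> \<le> \<bar>y$i\<bar> / \<bar>y$i\<bar>" using xy by (intro divide_right_mono) auto
      then have "\<bar>x$i / y$i\<bar> \<le> 1" using False by (simp only: abs_divide) simp
      then show ?thesis by linarith
    qed
    ultimately show ?thesis using False by (simp add: g_def)
  qed
  have "x = (\<chi> i. if i \<in> UNIV then g i * y$i else y$i)"
    using xy by (clarsimp simp: vec_eq_iff g_def) (metis abs_le_zero_iff abs_zero)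
  moreover have "N (\<chi> i. if i \<in> UNIV then g i * y$i else y$i) \<le> N y"
    by (rule core_multi[OF core g]) simp
  ultimately show "N x \<le> N y" by simp
qed

lemma P3_core: assumes P3: "\<forall>d. (\<forall>i. d i \<ge> 0) \<longrightarrow> matrix_measure N (diagm d) = Max (range d)"
  shows "matrix_measure N (- diagm (Ek k)) \<le> 0"
proof -
  have eq: "- diagm (Ek k) = diagm (\<lambda>i. 1 - Ek k i) - mat 1"
    by (simp add: diag_id diag_diff diag_neg)
  have "matrix_measure N (diagm (\<lambda>i. 1 - Ek k i)) = Max (range (\<lambda>i. 1 - Ek k i))"
    using P3 by (simp add: Ek_def)
  also have "\<dots> \<le> 1" by (subst Max_le_iff) (auto simp: Ek_def)
  finally show ?thesis using mu_shift[of "diagm (\<lambda>i. 1 - Ek k i)"] unfolding eq by simp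
qed

end

theorem theorem1:
  fixes N :: "real^'n \<Rightarrow> real"
  assumes "is_vnorm N"
  defines "P1 \<equiv> orthant_monotonic N"
      and "P2 \<equiv> (\<forall>d. (\<forall>i. d i \<ge> 0) \<longrightarrow> matrix_measure N (- diagm d) \<le> 0)"
      and "P3 \<equiv> (\<forall>d. (\<forall>i. d i \<ge> 0) \<longrightarrow> matrix_measure N (diagm d) = Max (range d))"
      and "P4 \<equiv> (\<exists>A. \<forall>d. (\<forall>i. d i \<ge> 0) \<longrightarrow> matrix_measure N (A - diagm d) < 0)"
  shows "(P1 \<longleftrightarrow> P2) \<and> (P1 \<longleftrightarrow> P3) \<and> (P1 \<longleftrightarrow> P4)"
proof -
  interpret vn N by unfold_locales (rule assms(1))
  have 12: "P1 \<Longrightarrow> P2" unfolding P1_def P2_def using P1_P2 by blast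
  have 13: "P1 \<Longrightarrow> P3" unfolding P1_def P3_def using P1_P3 by blast
  have 14: "P1 \<Longrightarrow> P4" unfolding P1_def P4_def using P1_P4 by blast
  have 21: "P2 \<Longrightarrow> P1" unfolding P1_def P2_def
  proof (rule core_P1)
    fix k assume "\<forall>d. (\<forall>i. d i \<ge> 0) \<longrightarrow> matrix_measure N (- diagm d) \<le> 0"
    then show "matrix_measure N (- diagm (Ek k)) \<le> 0" by (simp add: Ek_def)
  qed
  have 31: "P3 \<Longrightarrow> P1" unfolding P1_def P3_def using core_P1 P3_core by blast
  have 42: "P4 \<Longrightarrow> P2" unfolding P4_def P2_def using P4_P2 by blast
  show ?thesis using 12 13 14 21 31 42 by blast
qed

end
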